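(* Let $X_0$ be a compact conformally hyperbolic Riemann surface. Then every geodesic current on $X_0$ is bounded, i.e. $\mathcal C_{\mathrm{bd}}(X_0)=\mathcal C(X_0)$, and the uniform weak* topology coincides with the weak* topology on this space.
   Context: Conformally hyperbolic: universal cover $\widetilde X_0\cong\mathbb D$, with circle at infinity $\partial_\infty\widetilde X_0$ and space of oriented geodesics $G(\widetilde X_0)=\partial_\infty\widetilde X_0\times\partial_\infty\widetilde X_0-\Delta$, on which $\pi_1(X_0)$ and the group $\mathbf H(\widetilde X_0)$ of biholomorphic self-maps act. $\mathcal C(X_0)$ is the set of geodesic currents: $\pi_1(X_0)$-invariant Radon measures on $G(\widetilde X_0)$. The weak* topology is given by seminorms $|\alpha|_\xi=|\int\xi\,d\alpha|$ for continuous compactly supported $\xi\colon G(\widetilde X_0)\to\mathbb R$. A current is bounded if $\|\alpha\|_\xi=\sup_{\phi\in\mathbf H(\widetilde X_0)}|\int\xi\circ\phi\,d\alpha|<\infty$ for all such $\xi$; $\mathcal C_{\mathrm{bd}}(X_0)$ is the set of bounded currents and the uniform weak* topology is defined by the seminorms $\|\cdot\|_\xi$. *)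

theory Defs
  imports "HOL-Analysis.Analysis" "HOL-Complex_Analysis.Complex_Analysis"
begin

text \<open>Model: the universal cover of X0 is the unit disc; its circle at infinity is
  the unit circle. Biholomorphic self-maps of the disc, taken together with their
  (unique) continuous extension to the closed disc, which gives the boundary action.\<close>

definition disc_auts :: "(complex \<Rightarrow> complex) set" where
  "disc_auts = {f. f holomorphic_on ball 0 1 \<and> bij_betw f (ball 0 1) (ball 0 1)
                   \<and> continuous_on (cball 0 1) f}"

definition geod_space :: "(complex \<times> complex) set" where
  "geod_space = {(x, y). x \<in> sphere 0 1 \<and> y \<in> sphere 0 1 \<and> x \<noteq> y}"

definition geod_act :: "(complex \<Rightarrow> complex) \<Rightarrow> complex \<times> complex \<Rightarrow> complex \<times> complex" where
  "geod_act g = (\<lambda>(x, y). (g x, g y))"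

text \<open>Gamma is the deck group of a compact Riemann surface X0 = D/Gamma:
  a group of disc automorphisms acting freely and properly discontinuously
  on the disc with compact quotient.\<close>
definition cocompact_deck_group :: "(complex \<Rightarrow> complex) set \<Rightarrow> bool" where
  "cocompact_deck_group \<Gamma> \<longleftrightarrow>
     \<Gamma> \<subseteq> disc_auts \<and>
     (\<exists>e\<in>\<Gamma>. \<forall>z\<in>ball 0 1. e z = z) \<and>
     (\<forall>g\<in>\<Gamma>. \<forall>h\<in>\<Gamma>. \<exists>k\<in>\<Gamma>. \<forall>z\<in>ball 0 1. k z = g (h z)) \<and>
     (\<forall>g\<in>\<Gamma>. \<exists>k\<in>\<Gamma>. \<forall>z\<in>ball 0 1. k (g z) = z) \<and>
     (\<forall>g\<in>\<Gamma>. (\<exists>z\<in>ball 0 1. g z = z) \<longrightarrow> (\<forall>z\<in>ball 0 1. g z = z)) \<and>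
     (\<forall>K. compact K \<and> K \<subseteq> ball 0 1 \<longrightarrow>
          finite {restrict g (ball 0 1) | g. g \<in> \<Gamma> \<and> g ` K \<inter> K \<noteq> {}}) \<and>
     (\<exists>K. compact K \<and> K \<subseteq> ball 0 1 \<and> (\<Union>g\<in>\<Gamma>. g ` K) = ball 0 1)"

text \<open>Geodesic currents: Gamma-invariant Radon (= locally finite Borel, G being locally
  compact, second countable) measures on G.\<close>
definition geodesic_currents :: "(complex \<Rightarrow> complex) set \<Rightarrow> (complex \<times> complex) measure set" where
  "geodesic_currents \<Gamma> = {\<alpha>. sets \<alpha> = sets (restrict_space borel geod_space) \<and>
      (\<forall>K. compact K \<and> K \<subseteq> geod_space \<longrightarrow> emeasure \<alpha> K < \<infinity>) \<and>
      (\<forall>g\<in>\<Gamma>. distr \<alpha> \<alpha> (geod_act g) = \<alpha>)}"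

definition cc_test :: "(complex \<times> complex \<Rightarrow> real) \<Rightarrow> bool" where
  "cc_test \<xi> \<longleftrightarrow> continuous_on geod_space \<xi> \<and>
     (\<exists>K. compact K \<and> K \<subseteq> geod_space \<and> (\<forall>p\<in>geod_space - K. \<xi> p = 0))"

definition pairing :: "(complex \<times> complex) measure \<Rightarrow> (complex \<times> complex \<Rightarrow> real) \<Rightarrow> real" where
  "pairing \<alpha> \<xi> = integral\<^sup>L \<alpha> \<xi>"

definition bounded_currents :: "(complex \<Rightarrow> complex) set \<Rightarrow> (complex \<times> complex) measure set" where
  "bounded_currents \<Gamma> = {\<alpha> \<in> geodesic_currents \<Gamma>. \<forall>\<xi>. cc_test \<xi> \<longrightarrow>
      bdd_above ((\<lambda>\<phi>. \<bar>pairing \<alpha> (\<xi> \<circ> geod_act \<phi>)\<bar>) ` disc_auts)}"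

definition weak_star_topology :: "(complex \<times> complex) measure set \<Rightarrow> (complex \<times> complex) measure topology" where
  "weak_star_topology C = topology_generated_by
     {{\<beta> \<in> C. \<bar>pairing \<beta> \<xi> - pairing \<alpha> \<xi>\<bar> < e} | \<alpha> \<xi> e. \<alpha> \<in> C \<and> cc_test \<xi> \<and> e > 0}"

definition uniform_weak_star_topology :: "(complex \<times> complex) measure set \<Rightarrow> (complex \<times> complex) measure topology" where
  "uniform_weak_star_topology C = topology_generated_by
     {{\<beta> \<in> C. (SUP \<phi>\<in>disc_auts. \<bar>pairing \<beta> (\<xi> \<circ> geod_act \<phi>) - pairing \<alpha> (\<xi> \<circ> geod_act \<phi>)\<bar>) < e}
       | \<alpha> \<xi> e. \<alpha> \<in> C \<and> cc_test \<xi> \<and> e > 0}"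

end

theory Submission
  imports Defs
begin


definition mob :: "complex \<Rightarrow> complex \<Rightarrow> complex \<Rightarrow> complex" where
  "mob u a z = u * (z - a) / (1 - cnj a * z)"

lemma cnj_mult_self_norm1: "norm z = 1 \<Longrightarrow> cnj z * z = 1"
  by (metis complex_norm_square mult.commute one_power2 of_real_1)

lemma mob_den_nz:
  assumes "norm a < 1" "norm z \<le> 1"
  shows "1 - cnj a * z \<noteq> 0"
proof
  assume "1 - cnj a * z = 0"
  then have "norm (cnj a * z) = 1" by (metis eq_iff_diff_eq_0 norm_one)
  moreover have "norm (cnj a * z) < 1"
    using assms by (simp add: norm_mult) (metis mult_le_one norm_ge_zero less_le_trans mult_strict_right_mono order_le_less mult_less_cancel_left1 mult_1_right)
  ultimately show False by simp
qed

lemma mob_sphere: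
  assumes "norm a < 1" "norm u = 1" "norm z = 1"
  shows "norm (mob u a z) = 1"
proof -
  have zz: "cnj z * z = 1" using assms(3) by (rule cnj_mult_self_norm1)
  have "1 - cnj a * z = z * (cnj z - cnj a)" using zz by (simp add: algebra_simps mult.commute)
  hence "norm (1 - cnj a * z) = norm (z - a)"
    using assms(3) by (simp add: norm_mult complex_cnj_diff[symmetric] del: complex_cnj_diff)
  moreover have "1 - cnj a * z \<noteq> 0" using mob_den_nz assms by simp
  moreover have "z \<noteq> a" using assms by auto
  ultimately show ?thesis using assms by (simp add: mob_def norm_mult norm_divide)
qed

lemma mob_inv:
  assumes "norm a < 1" "norm u = 1" "norm z \<le> 1"
  shows "mob (cnj u) (-u*a) (mob u a z) = z"
proof -
  have D: "1 - cnj a * z \<noteq> 0" using mob_den_nz assms by simp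
  have uu: "cnj u * u = 1" using assms(2) by (rule cnj_mult_self_norm1)
  have aa: "cnj a * a \<noteq> 1" using assms(1)
    by (metis complex_mod_cnj norm_mult norm_one less_irrefl mult_le_one norm_ge_zero less_imp_le not_le mult_strict_mono' mult_less_cancel_right1)
  have N: "1 - cnj (-u*a) * (u * (z - a) / (1 - cnj a * z)) = (1 - cnj a * a) / (1 - cnj a * z)"
  proof -
    have "cnj (-u*a) * (u * (z - a)) = - (cnj u * u) * cnj a * (z - a)" by (simp add: algebra_simps)
    also have "\<dots> = - cnj a * (z - a)" using uu by simp
    finally show ?thesis using D by (simp add: field_simps)
  qed
  have M: "u * (z - a) / (1 - cnj a * z) - (-u*a) = u * z * (1 - cnj a * a) / (1 - cnj a * z)"
    using D by (simp add: field_simps)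
  have "mob (cnj u) (-u*a) (mob u a z) = cnj u * (u * z * (1 - cnj a * a) / (1 - cnj a * z)) / ((1 - cnj a * a) / (1 - cnj a * z))"
    unfolding mob_def[of u] unfolding mob_def M N ..
  also have "\<dots> = (cnj u * u) * z"
  proof -
    have c: "1 - cnj a * a \<noteq> 0" using aa by simp
    have "\<And>x y c d::complex. c \<noteq> 0 \<Longrightarrow> d \<noteq> 0 \<Longrightarrow> x * (y * c / d) / (c / d) = x * y" by (simp add: field_simps)
    from this[OF c D, of "cnj u" "u * z"] show ?thesis by (simp add: mult.assoc)
  qed
  finally show ?thesis using uu by simp
qed



lemma mob_cont: "norm a < 1 \<Longrightarrow> continuous_on (cball 0 1) (mob u a)"
  unfolding mob_def by (intro continuous_intros) (use mob_den_nz[of a] in force)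

lemma mob_eq_Moeb: "mob 1 a = Moebius_function 0 a"
  by (auto simp: mob_def Moebius_function_def fun_eq_iff)

lemma disc_aut_mob:
  assumes "\<phi> \<in> disc_auts"
  obtains u a where "norm u = 1" "norm a < 1" "\<And>z. z \<in> cball 0 1 \<Longrightarrow> \<phi> z = mob u a z"
proof -
  let ?B = "ball (0::complex) 1"
  have hol: "\<phi> holomorphic_on ?B" and bij: "bij_betw \<phi> ?B ?B" and cont: "continuous_on (cball 0 1) \<phi>"
    using assms by (auto simp: disc_auts_def)
  have "0 \<in> \<phi> ` ?B" using bij by (simp add: bij_betw_def)
  then obtain a where a: "a \<in> ?B" "\<phi> a = 0" by auto
  have inj: "inj_on \<phi> ?B" using bij bij_betw_def by blast
  obtain gi where gi_hol: "gi holomorphic_on (\<phi> ` ?B)" and gi: "\<And>z. z \<in> ?B \<Longrightarrow> gi (\<phi> z) = z"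
    using holomorphic_has_inverse[OF hol open_ball inj] by blast
  have im: "\<phi> ` ?B = ?B" using bij by (simp add: bij_betw_def)
  have gi2: "\<phi> (gi w) = w" and gib: "gi w \<in> ?B" if "w \<in> ?B" for w
  proof -
    have "w \<in> \<phi> ` ?B" using that im by simp
    then obtain z where z: "z \<in> ?B" "w = \<phi> z" by (rule imageE) simp
    then have "gi w = z" using gi by simp
    then show "\<phi> (gi w) = w" "gi w \<in> ?B" using z by simp_all
  qed
  define M where "M c = Moebius_function 0 c" for c
  have na: "norm a < 1" "norm (-a) < 1" using a by auto
  have Mhol: "M c holomorphic_on ?B" if "norm c < 1" for c
    unfolding M_def by (rule Moebius_function_holomorphic) (use that in simp)
  have Mb: "M c z \<in> ?B" if "norm c < 1" "z \<in> ?B" for c z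
    unfolding M_def using Moebius_function_norm_lt_1[of c z 0] that by simp
  have Mc: "M (-a) (M a z) = z" "M a (M (-a) z) = z" if "z \<in> ?B" for z
    unfolding M_def using Moebius_function_compose[of "-a" a z] Moebius_function_compose[of a "-a" z] na that by simp_all
  define f where "f = \<phi> \<circ> M (-a)"
  define h where "h = M a \<circ> gi"
  have M0: "M (-a) 0 = a" by (simp add: M_def Moebius_function_of_zero)
  have f0: "f 0 = 0" using a by (simp add: f_def M0)
  have "gi 0 = a" using gi[of a] a by simp
  then have h0: "h 0 = 0" by (simp add: h_def M_def Moebius_function_eq_zero)
  have fhol: "f holomorphic_on ?B" unfolding f_def
  proof (rule holomorphic_on_compose)
    show "M (- a) holomorphic_on ?B" using Mhol[OF na(2)] .
    show "\<phi> holomorphic_on M (- a) ` ?B" by (rule holomorphic_on_subset[OF hol]) (use Mb[OF na(2)] in blast)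
  qed
  have hhol: "h holomorphic_on ?B" unfolding h_def
  proof (rule holomorphic_on_compose)
    show "gi holomorphic_on ?B" using gi_hol im by simp
    show "M a holomorphic_on gi ` ?B" by (rule holomorphic_on_subset[OF Mhol[OF na(1)]]) (use gib in blast)
  qed
  have fb: "norm (f z) < 1" if "norm z < 1" for z
  proof -
    have "M (-a) z \<in> ?B" using Mb[OF na(2)] that by simp
    then have "\<phi> (M (-a) z) \<in> ?B" using im by blast
    then show ?thesis by (simp add: f_def)
  qed
  have hb: "norm (h z) < 1" if "norm z < 1" for z
  proof -
    have "gi z \<in> ?B" using gib that by simp
    then show ?thesis using Mb[OF na(1)] by (simp add: h_def)
  qed
  have fh: "f (h z) = z" if "z \<in> ?B" for z
  proof -
    have "gi z \<in> ?B" using gib that by simp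
    then have "M (-a) (M a (gi z)) = gi z" by (rule Mc)
    then show ?thesis using gi2[OF that] by (simp add: f_def h_def)
  qed
  define w where "w = h (1/2)"
  have wB: "norm w < 1" using hb w_def by simp
  have fw: "f w = 1/2" using fh w_def by simp
  have "norm (f w) \<le> norm w" using Schwarz_Lemma(1)[OF fhol f0 fb wB] .
  moreover have "norm w \<le> norm (1/2::complex)" unfolding w_def using Schwarz_Lemma(1)[OF hhol h0 hb, of "1/2"] by simp
  moreover have "norm (f w) = 1/2" unfolding fw by (simp add: norm_divide)
  ultimately have nw: "norm (f w) = norm w" "w \<noteq> 0" by auto
  obtain u where u: "\<And>z. norm z < 1 \<Longrightarrow> f z = u * z" "norm u = 1"
  proof -
    have "\<exists>z. norm z < 1 \<and> z \<noteq> 0 \<and> norm (f z) = norm z" using nw wB by blast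
    then have "\<exists>\<alpha>. (\<forall>z. norm z < 1 \<longrightarrow> f z = \<alpha> * z) \<and> norm \<alpha> = 1"
      using Schwarz_Lemma(3)[OF fhol f0 fb wB] by blast
    then show ?thesis using that by blast
  qed
  have onB: "\<phi> z = mob u a z" if "z \<in> ?B" for z
  proof -
    have "\<phi> z = f (M a z)" using that by (simp add: f_def Mc)
    also have "\<dots> = u * M a z" using u Mb[OF na(1) that] by simp
    finally show ?thesis by (simp add: M_def Moebius_function_def mob_def)
  qed
  have "(\<lambda>z. \<phi> z - mob u a z) ` closure ?B \<subseteq> {0}"
  proof (rule image_closure_subset)
    show "continuous_on (closure ?B) (\<lambda>z. \<phi> z - mob u a z)"
      using cont mob_cont[OF na(1), of u] by (simp add: continuous_on_diff)
  qed (use onB in auto)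
  then have "\<phi> z = mob u a z" if "z \<in> cball 0 1" for z using that by (auto simp: image_subset_iff)
  then show ?thesis using that u na by blast
qed



abbreviation "G \<equiv> geod_space"

lemma geod_act_eq: "geod_act g p = (g (fst p), g (snd p))"
  by (cases p) (simp add: geod_act_def)

lemma G_iff: "p \<in> G \<longleftrightarrow> norm (fst p) = 1 \<and> norm (snd p) = 1 \<and> fst p \<noteq> snd p"
  by (cases p) (auto simp: geod_space_def)

lemma G_sub: "G \<subseteq> cball 0 1 \<times> cball 0 1"
  by (auto simp: geod_space_def)

lemma mob_inj_cball:
  assumes "norm a < 1" "norm u = 1" "norm x \<le> 1" "norm y \<le> 1" "mob u a x = mob u a y"
  shows "x = y"
  by (metis assms mob_inv)

lemma act_mob_G:
  assumes "norm a < 1" "norm u = 1" "p \<in> G"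
  shows "geod_act (mob u a) p \<in> G"
proof -
  have "mob u a (fst p) \<noteq> mob u a (snd p)"
    using assms mob_inj_cball[OF assms(1,2), of "fst p" "snd p"] by (auto simp: G_iff)
  then show ?thesis using assms mob_sphere[OF assms(1,2)] by (auto simp: G_iff geod_act_eq)
qed

lemma act_mob_inv:
  assumes "norm a < 1" "norm u = 1" "p \<in> G"
  shows "geod_act (mob (cnj u) (-u*a)) (geod_act (mob u a) p) = p"
  using assms mob_inv[OF assms(1,2)] by (auto simp: G_iff geod_act_eq)

lemma norm_inv_par: "norm a < 1 \<Longrightarrow> norm u = 1 \<Longrightarrow> norm (-u*a) < 1" "norm u = 1 \<Longrightarrow> norm (cnj u) = 1"
  by (auto simp: norm_mult)

definition jm :: "complex \<times> complex \<times> (complex \<times> complex) \<Rightarrow> complex \<times> complex" where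
  "jm x = geod_act (mob (fst x) (fst (snd x))) (snd (snd x))"

lemma jm_cont: "continuous_on (UNIV \<times> (ball 0 1 \<times> (cball 0 1 \<times> cball 0 1))) jm"
  unfolding jm_def geod_act_eq mob_def
  apply (intro continuous_intros)
  using mob_den_nz by (auto simp: mem_Times_iff)

lemma act_cont: "norm a < 1 \<Longrightarrow> continuous_on G (geod_act (mob u a))"
proof -
  assume a: "norm a < 1"
  have "continuous_on G (jm \<circ> (\<lambda>p. (u, a, p)))"
  proof (rule continuous_on_compose)
    show "continuous_on G (\<lambda>p. (u, a, p))" by (intro continuous_intros)
    show "continuous_on ((\<lambda>p. (u, a, p)) ` G) jm"
      by (rule continuous_on_subset[OF jm_cont]) (use a G_sub in auto)
  qed
  then show ?thesis by (simp add: jm_def o_def)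
qed



lemma cur_sets: "\<beta> \<in> geodesic_currents \<Gamma> \<Longrightarrow> sets \<beta> = sets (restrict_space borel G)"
  by (simp add: geodesic_currents_def)

lemma cur_space: "\<beta> \<in> geodesic_currents \<Gamma> \<Longrightarrow> space \<beta> = G"
  using sets_eq_imp_space_eq[OF cur_sets] by (simp add: space_restrict_space)

lemma cur_meas_fun:
  assumes "\<beta> \<in> geodesic_currents \<Gamma>" "continuous_on G f"
  shows "f \<in> borel_measurable \<beta>"
proof -
  have "f \<in> borel_measurable (restrict_space borel G)"
    by (rule borel_measurable_continuous_on_restrict[OF assms(2)])
  then show ?thesis by (subst measurable_cong_sets[OF cur_sets[OF assms(1)] refl])
qed

lemma cur_compact_sets:
  assumes "\<beta> \<in> geodesic_currents \<Gamma>" "compact L" "L \<subseteq> G"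
  shows "L \<in> sets \<beta>"
proof -
  have "L \<in> sets borel" using assms(2) by (simp add: compact_imp_closed borel_closed)
  then have "G \<inter> L \<in> sets (restrict_space borel G)" by (auto simp: sets_restrict_space)
  then show ?thesis using assms(3) cur_sets[OF assms(1)] by (simp add: Int_absorb1)
qed

lemma cur_compact_fin:
  assumes "\<beta> \<in> geodesic_currents \<Gamma>" "compact L" "L \<subseteq> G"
  shows "emeasure \<beta> L < \<infinity>"
  using assms by (simp add: geodesic_currents_def)

lemma cur_act_meas:
  assumes "\<beta> \<in> geodesic_currents \<Gamma>" "norm a < 1" "norm u = 1"
  shows "geod_act (mob u a) \<in> measurable \<beta> \<beta>"
proof -
  have "geod_act (mob u a) \<in> measurable (restrict_space borel G) borel"
    by (rule borel_measurable_continuous_on_restrict[OF act_cont[OF assms(2)]])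
  then have "geod_act (mob u a) \<in> measurable (restrict_space borel G) (restrict_space borel G)"
    by (rule measurable_restrict_space2[rotated]) (use act_mob_G[OF assms(2,3)] in \<open>auto simp: space_restrict_space\<close>)
  then show ?thesis using measurable_cong_sets[OF cur_sets[OF assms(1)] cur_sets[OF assms(1)]] by simp
qed

lemma cur_int_bound:
  assumes "\<beta> \<in> geodesic_currents \<Gamma>" "compact L" "L \<subseteq> G" "continuous_on G (f::_\<Rightarrow>real)"
    "\<And>p. p \<in> G - L \<Longrightarrow> f p = 0" "\<And>p. p \<in> G \<Longrightarrow> \<bar>f p\<bar> \<le> B"
  shows "integrable \<beta> f" "\<bar>integral\<^sup>L \<beta> f\<bar> \<le> B * measure \<beta> L"
proof -
  have Ls: "L \<in> sets \<beta>" by (rule cur_compact_sets[OF assms(1-3)])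
  have Lf: "emeasure \<beta> L < \<infinity>" by (rule cur_compact_fin[OF assms(1-3)])
  have ii: "integrable \<beta> (\<lambda>x. B * indicator L x)"
    using Ls Lf by (intro integrable_mult_right integrable_real_indicator)
  have fm: "f \<in> borel_measurable \<beta>" by (rule cur_meas_fun[OF assms(1,4)])
  have bd: "\<bar>f x\<bar> \<le> B * indicator L x" if "x \<in> space \<beta>" for x
    using that assms(5,6) cur_space[OF assms(1)] by (cases "x \<in> L") auto
  show fi: "integrable \<beta> f"
  proof (rule Bochner_Integration.integrable_bound[OF ii fm], rule AE_I2)
    fix x assume "x \<in> space \<beta>"
    then have "\<bar>f x\<bar> \<le> \<bar>B * indicator L x\<bar>" using bd[of x] by linarith
    then show "norm (f x) \<le> norm (B * indicator L x :: real)" by simp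
  qed
  have "\<bar>integral\<^sup>L \<beta> f\<bar> \<le> integral\<^sup>L \<beta> (\<lambda>x. B * indicator L x)"
    by (rule integral_abs_bound_integral[OF fi ii bd])
  also have "\<dots> = B * measure \<beta> L" using Ls by (simp add: Int_absorb2 sets.sets_into_space)
  finally show "\<bar>integral\<^sup>L \<beta> f\<bar> \<le> B * measure \<beta> L" .
qed

lemma cur_invariant:
  assumes "\<beta> \<in> geodesic_currents \<Gamma>" "g \<in> \<Gamma>" "norm a < 1" "norm u = 1"
    "\<And>p. p \<in> G \<Longrightarrow> geod_act g p = geod_act (mob u a) p" "continuous_on G (f::_\<Rightarrow>real)"
  shows "integral\<^sup>L \<beta> f = integral\<^sup>L \<beta> (\<lambda>p. f (geod_act g p))"
proof -
  have T: "geod_act (mob u a) \<in> measurable \<beta> \<beta>" by (rule cur_act_meas[OF assms(1,3,4)])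
  have "distr \<beta> \<beta> (geod_act g) = \<beta>" using assms(1,2) by (simp add: geodesic_currents_def)
  moreover have "distr \<beta> \<beta> (geod_act g) = distr \<beta> \<beta> (geod_act (mob u a))"
    by (rule distr_cong) (use assms(5) cur_space[OF assms(1)] in auto)
  ultimately have "integral\<^sup>L \<beta> f = integral\<^sup>L (distr \<beta> \<beta> (geod_act (mob u a))) f" by simp
  also have "\<dots> = integral\<^sup>L \<beta> (\<lambda>p. f (geod_act (mob u a) p))"
    by (rule integral_distr[OF T cur_meas_fun[OF assms(1,6)]])
  also have "\<dots> = integral\<^sup>L \<beta> (\<lambda>p. f (geod_act g p))"
    by (rule Bochner_Integration.integral_cong) (use assms(5) cur_space[OF assms(1)] in auto)
  finally show ?thesis .
qed



lemma disc_aut_comp: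
  assumes "\<phi> \<in> disc_auts" "g \<in> disc_auts"
  shows "\<phi> \<circ> g \<in> disc_auts"
proof -
  let ?B = "ball (0::complex) 1"
  have g: "g holomorphic_on ?B" "bij_betw g ?B ?B" "continuous_on (cball 0 1) g"
    using assms(2) by (auto simp: disc_auts_def)
  have p: "\<phi> holomorphic_on ?B" "bij_betw \<phi> ?B ?B" "continuous_on (cball 0 1) \<phi>"
    using assms(1) by (auto simp: disc_auts_def)
  have gim: "g ` ?B = ?B" using g(2) by (simp add: bij_betw_def)
  have "g ` closure ?B \<subseteq> cball 0 1"
    by (rule image_closure_subset) (use g(3) gim in auto)
  then have gc: "g ` cball 0 1 \<subseteq> cball 0 1" by simp
  have "(\<phi> \<circ> g) holomorphic_on ?B"
    by (rule holomorphic_on_compose[OF g(1)]) (simp add: gim p(1))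
  moreover have "bij_betw (\<phi> \<circ> g) ?B ?B" by (rule bij_betw_trans[OF g(2) p(2)])
  moreover have "continuous_on (cball 0 1) (\<phi> \<circ> g)"
    by (rule continuous_on_compose[OF g(3)]) (rule continuous_on_subset[OF p(3) gc])
  ultimately show ?thesis by (simp add: disc_auts_def)
qed

lemma act_disc_aut:
  assumes "\<phi> \<in> disc_auts"
  obtains u a where "norm u = 1" "norm a < 1" "\<And>p. p \<in> G \<Longrightarrow> geod_act \<phi> p = geod_act (mob u a) p"
proof -
  obtain u a where "norm u = 1" "norm a < 1" "\<And>z. z \<in> cball 0 1 \<Longrightarrow> \<phi> z = mob u a z"
    using disc_aut_mob[OF assms] by blast
  moreover have "\<And>p. p \<in> G \<Longrightarrow> fst p \<in> cball 0 1 \<and> snd p \<in> cball 0 1" using G_sub by auto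
  ultimately show ?thesis using that by (auto simp: geod_act_eq)
qed

lemma reduce_aut:
  assumes "cocompact_deck_group \<Gamma>" "K \<subseteq> ball 0 1" "(\<Union>g\<in>\<Gamma>. g ` K) = ball 0 1" "\<phi> \<in> disc_auts"
  obtains g u k where "g \<in> \<Gamma>" "norm u = 1" "k \<in> K"
    "\<And>p. p \<in> G \<Longrightarrow> geod_act \<phi> (geod_act g p) = geod_act (mob u k) p"
proof -
  have Gd: "\<Gamma> \<subseteq> disc_auts" using assms(1) by (simp add: cocompact_deck_group_def)
  obtain u a where ua: "norm u = 1" "norm a < 1" "\<And>z. z \<in> cball 0 1 \<Longrightarrow> \<phi> z = mob u a z"
    using disc_aut_mob[OF assms(4)] by blast
  have "a \<in> (\<Union>g\<in>\<Gamma>. g ` K)" using assms(3) ua(2) by simp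
  then obtain g k where gk: "g \<in> \<Gamma>" "k \<in> K" "a = g k" by blast
  have psi: "\<phi> \<circ> g \<in> disc_auts" using disc_aut_comp[OF assms(4)] Gd gk(1) by blast
  obtain v c where vc: "norm v = 1" "norm c < 1" "\<And>z. z \<in> cball 0 1 \<Longrightarrow> (\<phi> \<circ> g) z = mob v c z"
    using disc_aut_mob[OF psi] by blast
  have kB: "k \<in> cball 0 1" "norm k < 1" using gk(2) assms(2) by auto
  have "mob v c k = 0" using vc(3)[OF kB(1)] gk(3) ua(3)[of a] ua(2) by (simp add: mob_def)
  then have "v * (k - c) = 0" using mob_den_nz[OF vc(2), of k] kB by (simp add: mob_def)
  moreover have "v \<noteq> 0" using vc(1) by auto
  ultimately have "k = c" by simp
  have gc: "g ` cball 0 1 \<subseteq> cball 0 1"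
  proof -
    have gg: "continuous_on (cball 0 1) g" "bij_betw g (ball 0 1) (ball 0 1)" using Gd gk(1) by (auto simp: disc_auts_def)
    have gim: "g ` ball 0 1 = ball 0 1" using gg(2) by (simp add: bij_betw_def)
    have "g ` closure (ball 0 1) \<subseteq> cball 0 1"
      by (rule image_closure_subset) (use gg(1) gim in auto)
    then show ?thesis by simp
  qed
  have "geod_act \<phi> (geod_act g p) = geod_act (mob v k) p" if "p \<in> G" for p
  proof -
    have "fst p \<in> cball 0 1" "snd p \<in> cball 0 1" using that G_sub by auto
    then show ?thesis using vc(3) \<open>k = c\<close> by (simp add: geod_act_eq)
  qed
  then show ?thesis using that gk vc(1) by blast
qed



lemma cont_comp_act:
  assumes "norm a < 1" "norm u = 1" "continuous_on G \<zeta>"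
  shows "continuous_on G (\<zeta> \<circ> geod_act (mob u a))"
proof (rule continuous_on_compose[OF act_cont[OF assms(1)]])
  show "continuous_on (geod_act (mob u a) ` G) \<zeta>"
    by (rule continuous_on_subset[OF assms(3)]) (use act_mob_G[OF assms(1,2)] in blast)
qed

lemma pair_reduce:
  assumes "cocompact_deck_group \<Gamma>" "K \<subseteq> ball 0 1" "(\<Union>g\<in>\<Gamma>. g ` K) = ball 0 1" "\<phi> \<in> disc_auts"
    "continuous_on G (\<zeta>::_\<Rightarrow>real)"
  obtains u k where "norm u = 1" "k \<in> K"
    "\<And>\<beta>. \<beta> \<in> geodesic_currents \<Gamma> \<Longrightarrow> pairing \<beta> (\<zeta> \<circ> geod_act \<phi>) = pairing \<beta> (\<zeta> \<circ> geod_act (mob u k))"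
proof -
  obtain g u k where guk: "g \<in> \<Gamma>" "norm u = 1" "k \<in> K"
    and H: "\<And>p. p \<in> G \<Longrightarrow> geod_act \<phi> (geod_act g p) = geod_act (mob u k) p"
    using reduce_aut[OF assms(1-4)] by blast
  have gd: "g \<in> disc_auts" using assms(1) guk(1) by (auto simp: cocompact_deck_group_def)
  obtain u1 a1 where g1: "norm u1 = 1" "norm a1 < 1" "\<And>p. p \<in> G \<Longrightarrow> geod_act g p = geod_act (mob u1 a1) p"
    using act_disc_aut[OF gd] by blast
  obtain u0 a0 where p0: "norm u0 = 1" "norm a0 < 1" "\<And>p. p \<in> G \<Longrightarrow> geod_act \<phi> p = geod_act (mob u0 a0) p"
    using act_disc_aut[OF assms(4)] by blast
  have c0: "continuous_on G (\<zeta> \<circ> geod_act (mob u0 a0))" by (rule cont_comp_act[OF p0(2,1) assms(5)])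
  have c1: "continuous_on G (\<zeta> \<circ> geod_act \<phi>)"
    by (rule continuous_on_cong[THEN iffD1, OF refl _ c0]) (simp add: p0(3))
  have "pairing \<beta> (\<zeta> \<circ> geod_act \<phi>) = pairing \<beta> (\<zeta> \<circ> geod_act (mob u k))" if b: "\<beta> \<in> geodesic_currents \<Gamma>" for \<beta>
  proof -
    have "pairing \<beta> (\<zeta> \<circ> geod_act \<phi>) = integral\<^sup>L \<beta> (\<lambda>p. (\<zeta> \<circ> geod_act \<phi>) (geod_act g p))"
      unfolding pairing_def by (rule cur_invariant[OF b guk(1) g1(2,1) g1(3) c1])
    also have "\<dots> = pairing \<beta> (\<zeta> \<circ> geod_act (mob u k))"
      unfolding pairing_def by (rule Bochner_Integration.integral_cong) (use H cur_space[OF b] in auto)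
    finally show ?thesis .
  qed
  then show ?thesis using that guk by blast
qed

lemma cc_test_facts:
  assumes "cc_test \<xi>"
  obtains Kx B where "compact Kx" "Kx \<subseteq> G" "\<And>p. p \<in> G - Kx \<Longrightarrow> \<xi> p = 0" "continuous_on G \<xi>"
    "\<And>p. p \<in> G \<Longrightarrow> \<bar>\<xi> p\<bar> \<le> B"
proof -
  obtain Kx where Kx: "compact Kx" "Kx \<subseteq> G" "\<And>p. p \<in> G - Kx \<Longrightarrow> \<xi> p = 0" and c: "continuous_on G \<xi>"
    using assms by (auto simp: cc_test_def)
  have "compact (\<xi> ` Kx)" by (rule compact_continuous_image[OF continuous_on_subset[OF c Kx(2)] Kx(1)])
  then obtain B where B: "\<And>x. x \<in> \<xi> ` Kx \<Longrightarrow> norm x \<le> B" using compact_imp_bounded bounded_iff by metis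
  have "\<bar>\<xi> p\<bar> \<le> \<bar>B\<bar>" if "p \<in> G" for p
  proof (cases "p \<in> Kx")
    case True then show ?thesis using B[of "\<xi> p"] by auto
  next
    case False then show ?thesis using Kx(3) that by auto
  qed
  then show ?thesis using that Kx c by blast
qed

lemma family:
  assumes "cc_test \<xi>" "compact K" "K \<subseteq> ball 0 1"
  obtains L B where "compact L" "L \<subseteq> G"
    "\<And>u k p. norm u = 1 \<Longrightarrow> k \<in> K \<Longrightarrow> p \<in> G - L \<Longrightarrow> \<xi> (geod_act (mob u k) p) = 0"
    "\<And>u k p. norm u = 1 \<Longrightarrow> k \<in> K \<Longrightarrow> p \<in> G \<Longrightarrow> \<bar>\<xi> (geod_act (mob u k) p)\<bar> \<le> B"
    "\<And>u k. norm u = 1 \<Longrightarrow> k \<in> K \<Longrightarrow> continuous_on G (\<xi> \<circ> geod_act (mob u k))"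
    "continuous_on (sphere 0 1 \<times> (K \<times> L)) (\<lambda>x. \<xi> (jm x))"
proof -
  obtain Kx B where Kx: "compact Kx" "Kx \<subseteq> G" "\<And>p. p \<in> G - Kx \<Longrightarrow> \<xi> p = 0" and c: "continuous_on G \<xi>"
    and B: "\<And>p. p \<in> G \<Longrightarrow> \<bar>\<xi> p\<bar> \<le> B"
    using cc_test_facts[OF assms(1)] by blast
  have kn: "norm k < 1" if "k \<in> K" for k using that assms(3) by auto
  define h where "h x = (cnj (fst x), -(fst x) * fst (snd x), snd (snd x))" for x :: "complex \<times> complex \<times> (complex \<times> complex)"
  define L where "L = (jm \<circ> h) ` (sphere 0 1 \<times> (K \<times> Kx))"
  have hin: "h ` (sphere 0 1 \<times> (K \<times> Kx)) \<subseteq> UNIV \<times> (ball 0 1 \<times> (cball 0 1 \<times> cball 0 1))"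
    using Kx(2) G_sub kn by (auto simp: h_def norm_mult)
  have "continuous_on (sphere 0 1 \<times> (K \<times> Kx)) (jm \<circ> h)"
  proof (rule continuous_on_compose)
    show "continuous_on (sphere 0 1 \<times> (K \<times> Kx)) h" unfolding h_def by (intro continuous_intros)
    show "continuous_on (h ` (sphere 0 1 \<times> (K \<times> Kx))) jm" by (rule continuous_on_subset[OF jm_cont hin])
  qed
  then have cL: "compact L" unfolding L_def
    by (rule compact_continuous_image) (intro compact_Times compact_sphere assms(2) Kx(1))
  have LG: "L \<subseteq> G"
  proof
    fix p assume "p \<in> L"
    then obtain u k q where "norm u = 1" "k \<in> K" "q \<in> Kx" "p = geod_act (mob (cnj u) (-u*k)) q"
      by (auto simp: L_def h_def jm_def)
    then show "p \<in> G" using act_mob_G[OF norm_inv_par(1)[OF kn] norm_inv_par(2)] Kx(2) by blast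
  qed
  have z: "\<xi> (geod_act (mob u k) p) = 0" if "norm u = 1" "k \<in> K" "p \<in> G - L" for u k p
  proof (rule ccontr)
    assume nz: "\<xi> (geod_act (mob u k) p) \<noteq> 0"
    let ?q = "geod_act (mob u k) p"
    have "?q \<in> G" using act_mob_G[OF kn[OF that(2)] that(1)] that(3) by blast
    then have q: "?q \<in> Kx" using Kx(3) nz by blast
    have "p = geod_act (mob (cnj u) (-u*k)) ?q" using act_mob_inv[OF kn[OF that(2)] that(1)] that(3) by simp
    also have "\<dots> = (jm \<circ> h) (u, k, ?q)" by (simp add: h_def jm_def)
    finally have "p \<in> L" unfolding L_def using q that(1,2) by auto
    then show False using that(3) by blast
  qed
  have b: "\<bar>\<xi> (geod_act (mob u k) p)\<bar> \<le> B" if "norm u = 1" "k \<in> K" "p \<in> G" for u k p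
    using B act_mob_G[OF kn[OF that(2)] that(1) that(3)] by blast
  have cc: "continuous_on G (\<xi> \<circ> geod_act (mob u k))" if "norm u = 1" "k \<in> K" for u k
    by (rule cont_comp_act[OF kn[OF that(2)] that(1) c])
  have "continuous_on (sphere 0 1 \<times> (K \<times> L)) (\<xi> \<circ> jm)"
  proof (rule continuous_on_compose)
    show "continuous_on (sphere 0 1 \<times> (K \<times> L)) jm"
      by (rule continuous_on_subset[OF jm_cont]) (use LG G_sub kn in auto)
    show "continuous_on (jm ` (sphere 0 1 \<times> (K \<times> L))) \<xi>"
      by (rule continuous_on_subset[OF c]) (use LG act_mob_G kn in \<open>auto simp: jm_def\<close>)
  qed
  then have "continuous_on (sphere 0 1 \<times> (K \<times> L)) (\<lambda>x. \<xi> (jm x))" by (simp add: o_def)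
  then show ?thesis using that cL LG z b cc by blast
qed



lemma chi_exists:
  assumes "compact L" "L \<subseteq> G"
  obtains ch where "cc_test ch" "\<And>p. p \<in> G \<Longrightarrow> indicator L p \<le> ch p"
proof (cases "L = {}")
  case True
  have "cc_test (\<lambda>_. 0)" unfolding cc_test_def by (intro conjI continuous_intros exI[of _ "{}"]) auto
  then show ?thesis using that True by auto
next
  case False
  define D where "D = (\<lambda>x. (x, x)) ` sphere (0::complex) 1"
  have cD: "compact D" unfolding D_def by (intro compact_continuous_image continuous_intros compact_sphere)
  have DL: "D \<inter> L = {}" using assms(2) by (auto simp: D_def geod_space_def)
  have "D \<noteq> {}" unfolding D_def by (metis empty_iff image_is_empty norm_one mem_sphere_0)
  then have s: "setdist D L > 0" using setdist_gt_0_compact_closed[OF cD compact_imp_closed[OF assms(1)]] False DL by auto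
  define s where "s = setdist D L"
  define ch where "ch p = max 0 (1 - 2 * infdist p L / s)" for p
  define Kc where "Kc = (sphere 0 1 \<times> sphere 0 1) \<inter> {p. infdist p L \<le> s / 2}"
  have "closed {p. infdist p L \<le> s / 2}"
    by (intro closed_Collect_le continuous_intros continuous_on_const) 
  then have cK: "compact Kc" unfolding Kc_def by (intro compact_Int_closed compact_Times compact_sphere)
  have KG: "Kc \<subseteq> G"
  proof
    fix p assume p: "p \<in> Kc"
    show "p \<in> G"
    proof (rule ccontr)
      assume "p \<notin> G"
      then have "p \<in> D" using p by (cases p) (auto simp: Kc_def geod_space_def D_def)
      then have "setdist D L \<le> setdist {p} L" by (intro setdist_subset_left) auto
      then have "s \<le> infdist p L" by (simp add: s_def infdist_eq_setdist)
      then show False using p s s_def by (auto simp: Kc_def)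
    qed
  qed
  have z: "ch p = 0" if "p \<in> G - Kc" for p
  proof -
    have "p \<in> sphere 0 1 \<times> sphere 0 1" using that by (cases p) (auto simp: geod_space_def)
    then have "infdist p L > s / 2" using that by (auto simp: Kc_def)
    then have "1 - 2 * infdist p L / s \<le> 0" using s s_def by (simp add: field_simps)
    then show ?thesis by (simp add: ch_def)
  qed
  have "continuous_on G ch" unfolding ch_def by (intro continuous_intros) (use s s_def in auto)
  then have "cc_test ch" unfolding cc_test_def using cK KG z by blast
  moreover have "indicator L p \<le> ch p" if "p \<in> G" for p
    by (cases "p \<in> L") (auto simp: ch_def)
  ultimately show ?thesis using that by blast
qed

lemma cocompact_K:
  assumes "cocompact_deck_group \<Gamma>"
  obtains K where "compact K" "K \<subseteq> ball 0 1" "(\<Union>g\<in>\<Gamma>. g ` K) = ball 0 1"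
proof -
  have "\<exists>K. compact K \<and> K \<subseteq> ball 0 1 \<and> (\<Union>g\<in>\<Gamma>. g ` K) = ball 0 1"
    using assms[unfolded cocompact_deck_group_def] by (elim conjE)
  then show ?thesis using that by blast
qed

lemma uniform_bound:
  assumes "cocompact_deck_group \<Gamma>" "cc_test \<xi>"
  obtains L B where "compact L" "L \<subseteq> G"
    "\<And>\<beta> \<phi>. \<beta> \<in> geodesic_currents \<Gamma> \<Longrightarrow> \<phi> \<in> disc_auts \<Longrightarrow> \<bar>pairing \<beta> (\<xi> \<circ> geod_act \<phi>)\<bar> \<le> B * measure \<beta> L"
proof -
  obtain K where K: "compact K" "K \<subseteq> ball 0 1" "(\<Union>g\<in>\<Gamma>. g ` K) = ball 0 1"
    by (erule cocompact_K[OF assms(1)])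
  obtain L B where L: "compact L" "L \<subseteq> G"
    and z: "\<And>u k p. norm u = 1 \<Longrightarrow> k \<in> K \<Longrightarrow> p \<in> G - L \<Longrightarrow> \<xi> (geod_act (mob u k) p) = 0"
    and b: "\<And>u k p. norm u = 1 \<Longrightarrow> k \<in> K \<Longrightarrow> p \<in> G \<Longrightarrow> \<bar>\<xi> (geod_act (mob u k) p)\<bar> \<le> B"
    and c: "\<And>u k. norm u = 1 \<Longrightarrow> k \<in> K \<Longrightarrow> continuous_on G (\<xi> \<circ> geod_act (mob u k))"
    and "continuous_on (sphere 0 1 \<times> (K \<times> L)) (\<lambda>x. \<xi> (jm x))"
    by (erule family[OF assms(2) K(1,2)])
  have cx: "continuous_on G \<xi>" using assms(2) unfolding cc_test_def by (elim conjE)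
  have "\<bar>pairing \<beta> (\<xi> \<circ> geod_act \<phi>)\<bar> \<le> B * measure \<beta> L"
    if bp: "\<beta> \<in> geodesic_currents \<Gamma>" "\<phi> \<in> disc_auts" for \<beta> \<phi>
  proof -
    obtain u k where uk: "norm u = 1" "k \<in> K"
      and e: "\<And>\<beta>. \<beta> \<in> geodesic_currents \<Gamma> \<Longrightarrow> pairing \<beta> (\<xi> \<circ> geod_act \<phi>) = pairing \<beta> (\<xi> \<circ> geod_act (mob u k))"
      by (erule pair_reduce[OF assms(1) K(2,3) bp(2) cx])
    have "\<bar>pairing \<beta> (\<xi> \<circ> geod_act (mob u k))\<bar> \<le> B * measure \<beta> L"
      unfolding pairing_def
      by (rule cur_int_bound(2)[OF bp(1) L c[OF uk]]) (use z[OF uk] b[OF uk] in auto)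
    then show ?thesis using e[OF bp(1)] by simp
  qed
  then show ?thesis using that L by blast
qed

lemma part1:
  assumes "cocompact_deck_group \<Gamma>"
  shows "bounded_currents \<Gamma> = geodesic_currents \<Gamma>"
proof -
  have "bdd_above ((\<lambda>\<phi>. \<bar>pairing \<alpha> (\<xi> \<circ> geod_act \<phi>)\<bar>) ` disc_auts)"
    if ax: "\<alpha> \<in> geodesic_currents \<Gamma>" "cc_test \<xi>" for \<alpha> \<xi>
  proof -
    obtain L B where "compact L" "L \<subseteq> G" and LB: "\<And>\<beta> \<phi>. \<beta> \<in> geodesic_currents \<Gamma> \<Longrightarrow> \<phi> \<in> disc_auts \<Longrightarrow> \<bar>pairing \<beta> (\<xi> \<circ> geod_act \<phi>)\<bar> \<le> B * measure \<beta> L"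
      by (erule uniform_bound[OF assms ax(2)])
    show ?thesis by (rule bdd_aboveI2, rule LB[OF ax(1)])
  qed
  note bd = this
  show ?thesis
  proof (rule set_eqI)
    fix \<alpha>
    show "\<alpha> \<in> bounded_currents \<Gamma> \<longleftrightarrow> \<alpha> \<in> geodesic_currents \<Gamma>"
    proof
      assume "\<alpha> \<in> bounded_currents \<Gamma>"
      then show "\<alpha> \<in> geodesic_currents \<Gamma>" unfolding bounded_currents_def mem_Collect_eq by (elim conjE)
    next
      assume a: "\<alpha> \<in> geodesic_currents \<Gamma>"
      have "\<forall>\<xi>. cc_test \<xi> \<longrightarrow> bdd_above ((\<lambda>\<phi>. \<bar>pairing \<alpha> (\<xi> \<circ> geod_act \<phi>)\<bar>) ` disc_auts)"
        using bd[OF a] by (intro allI impI)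
      then show "\<alpha> \<in> bounded_currents \<Gamma>" using a unfolding bounded_currents_def by (intro CollectI conjI)
    qed
  qed
qed



lemma id_disc_aut: "id \<in> disc_auts"
  unfolding disc_auts_def by (auto intro: continuous_on_id)

lemma disc_auts_ne: "disc_auts \<noteq> {}" using id_disc_aut by blast

lemma act_id: "\<xi> \<circ> geod_act id = \<xi>"
  by (simp add: fun_eq_iff geod_act_eq)

lemma cc_integrable:
  assumes "\<beta> \<in> geodesic_currents \<Gamma>" "cc_test \<xi>"
  shows "integrable \<beta> \<xi>"
proof -
  obtain Kx B where Kx: "compact Kx" "Kx \<subseteq> G" "\<And>p. p \<in> G - Kx \<Longrightarrow> \<xi> p = 0" "continuous_on G \<xi>"
    "\<And>p. p \<in> G \<Longrightarrow> \<bar>\<xi> p\<bar> \<le> B" by (erule cc_test_facts[OF assms(2)])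
  show ?thesis by (rule cur_int_bound(1)[OF assms(1) Kx(1,2) Kx(4) Kx(3) Kx(5)])
qed

lemma pairing_diff:
  assumes "\<beta> \<in> geodesic_currents \<Gamma>" "cc_test f" "cc_test g"
  shows "pairing \<beta> f - pairing \<beta> g = pairing \<beta> (\<lambda>p. f p - g p)"
  unfolding pairing_def using cc_integrable[OF assms(1,2)] cc_integrable[OF assms(1,3)] by simp

lemma bdd_diff:
  assumes "cocompact_deck_group \<Gamma>" "cc_test \<xi>" "\<beta> \<in> geodesic_currents \<Gamma>" "\<gamma> \<in> geodesic_currents \<Gamma>"
  shows "bdd_above ((\<lambda>\<phi>. \<bar>pairing \<beta> (\<xi> \<circ> geod_act \<phi>) - pairing \<gamma> (\<xi> \<circ> geod_act \<phi>)\<bar>) ` disc_auts)"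
proof -
  obtain L B where "compact L" "L \<subseteq> G" and b: "\<And>\<beta> \<phi>. \<beta> \<in> geodesic_currents \<Gamma> \<Longrightarrow> \<phi> \<in> disc_auts \<Longrightarrow> \<bar>pairing \<beta> (\<xi> \<circ> geod_act \<phi>)\<bar> \<le> B * measure \<beta> L"
    by (erule uniform_bound[OF assms(1,2)])
  have "\<bar>pairing \<beta> (\<xi> \<circ> geod_act \<phi>) - pairing \<gamma> (\<xi> \<circ> geod_act \<phi>)\<bar> \<le> B * measure \<beta> L + B * measure \<gamma> L"
    if "\<phi> \<in> disc_auts" for \<phi>
    using b[OF assms(3) that] b[OF assms(4) that] by linarith
  then show ?thesis by (rule bdd_aboveI2)
qed

lemma W_open:
  assumes "cocompact_deck_group \<Gamma>" "\<alpha> \<in> geodesic_currents \<Gamma>" "cc_test \<xi>" "e > 0"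
  shows "openin (uniform_weak_star_topology (geodesic_currents \<Gamma>))
           {\<beta> \<in> geodesic_currents \<Gamma>. \<bar>pairing \<beta> \<xi> - pairing \<alpha> \<xi>\<bar> < e}"
  unfolding openin_subopen[of _ "{\<beta> \<in> geodesic_currents \<Gamma>. \<bar>pairing \<beta> \<xi> - pairing \<alpha> \<xi>\<bar> < e}"]
proof (intro ballI)
  let ?C = "geodesic_currents \<Gamma>"
  fix \<beta>0 assume b0: "\<beta>0 \<in> {\<beta> \<in> ?C. \<bar>pairing \<beta> \<xi> - pairing \<alpha> \<xi>\<bar> < e}"
  define e' where "e' = e - \<bar>pairing \<beta>0 \<xi> - pairing \<alpha> \<xi>\<bar>"
  have e': "e' > 0" using b0 by (simp add: e'_def)
  define U where "U = {\<beta> \<in> ?C. (SUP \<phi>\<in>disc_auts. \<bar>pairing \<beta> (\<xi> \<circ> geod_act \<phi>) - pairing \<beta>0 (\<xi> \<circ> geod_act \<phi>)\<bar>) < e'}"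
  have "openin (uniform_weak_star_topology ?C) U"
    unfolding uniform_weak_star_topology_def U_def
    by (rule topology_generated_by_Basis) (use b0 assms(3) e' in blast)
  moreover have "\<beta>0 \<in> U" using b0 e' disc_auts_ne by (simp add: U_def)
  moreover have "U \<subseteq> {\<beta> \<in> ?C. \<bar>pairing \<beta> \<xi> - pairing \<alpha> \<xi>\<bar> < e}"
  proof
    fix \<beta> assume b: "\<beta> \<in> U"
    then have bC: "\<beta> \<in> ?C" by (simp add: U_def)
    have "\<bar>pairing \<beta> (\<xi> \<circ> geod_act id) - pairing \<beta>0 (\<xi> \<circ> geod_act id)\<bar>
          \<le> (SUP \<phi>\<in>disc_auts. \<bar>pairing \<beta> (\<xi> \<circ> geod_act \<phi>) - pairing \<beta>0 (\<xi> \<circ> geod_act \<phi>)\<bar>)"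
      by (rule cSUP_upper[OF id_disc_aut bdd_diff[OF assms(1,3) bC]]) (use b0 in simp)
    then have "\<bar>pairing \<beta> \<xi> - pairing \<beta>0 \<xi>\<bar> < e'" using b by (simp add: U_def act_id)
    then show "\<beta> \<in> {\<beta> \<in> ?C. \<bar>pairing \<beta> \<xi> - pairing \<alpha> \<xi>\<bar> < e}" using bC by (simp add: e'_def)
  qed
  ultimately show "\<exists>T. openin (uniform_weak_star_topology ?C) T \<and> \<beta>0 \<in> T \<and> T \<subseteq> {\<beta> \<in> ?C. \<bar>pairing \<beta> \<xi> - pairing \<alpha> \<xi>\<bar> < e}"
    by blast
qed



lemma dist_triple: "dist (u, k, p) (fst n, snd n, p) = dist (u, k) n"
  by (cases n) (simp add: dist_Pair_Pair)

lemma U_open: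
  assumes Gm: "cocompact_deck_group \<Gamma>" and aC: "\<alpha> \<in> geodesic_currents \<Gamma>" and xi: "cc_test \<xi>" and "e > 0"
  shows "openin (weak_star_topology (geodesic_currents \<Gamma>))
     {\<beta> \<in> geodesic_currents \<Gamma>. (SUP \<phi>\<in>disc_auts. \<bar>pairing \<beta> (\<xi> \<circ> geod_act \<phi>) - pairing \<alpha> (\<xi> \<circ> geod_act \<phi>)\<bar>) < e}"
    (is "openin _ ?U")
  unfolding openin_subopen[of _ ?U]
proof (intro ballI)
  let ?C = "geodesic_currents \<Gamma>"
  let ?T = "weak_star_topology ?C"
  fix \<beta>0 assume b0U: "\<beta>0 \<in> ?U"
  then have b0: "\<beta>0 \<in> ?C" by simp
  define d where "d = (SUP \<phi>\<in>disc_auts. \<bar>pairing \<beta>0 (\<xi> \<circ> geod_act \<phi>) - pairing \<alpha> (\<xi> \<circ> geod_act \<phi>)\<bar>)"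
  have de: "d < e" using b0U by (simp add: d_def)
  define \<delta> where "\<delta> = e - d"
  have dpos: "\<delta> > 0" using de by (simp add: \<delta>_def)
  have dle: "\<bar>pairing \<beta>0 (\<xi> \<circ> geod_act \<phi>) - pairing \<alpha> (\<xi> \<circ> geod_act \<phi>)\<bar> \<le> d" if "\<phi> \<in> disc_auts" for \<phi>
    unfolding d_def by (rule cSUP_upper[OF that bdd_diff[OF Gm xi b0 aC]])
  obtain K where K: "compact K" "K \<subseteq> ball 0 1" "(\<Union>g\<in>\<Gamma>. g ` K) = ball 0 1"
    by (erule cocompact_K[OF Gm])
  obtain L B where L: "compact L" "L \<subseteq> G"
    and z: "\<And>u k p. norm u = 1 \<Longrightarrow> k \<in> K \<Longrightarrow> p \<in> G - L \<Longrightarrow> \<xi> (geod_act (mob u k) p) = 0"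
    and b: "\<And>u k p. norm u = 1 \<Longrightarrow> k \<in> K \<Longrightarrow> p \<in> G \<Longrightarrow> \<bar>\<xi> (geod_act (mob u k) p)\<bar> \<le> B"
    and c: "\<And>u k. norm u = 1 \<Longrightarrow> k \<in> K \<Longrightarrow> continuous_on G (\<xi> \<circ> geod_act (mob u k))"
    and jc: "continuous_on (sphere 0 1 \<times> (K \<times> L)) (\<lambda>x. \<xi> (jm x))"
    by (erule family[OF xi K(1,2)])
  have cxi: "continuous_on G \<xi>" using xi unfolding cc_test_def by (elim conjE)
  have Hcc: "cc_test (\<xi> \<circ> geod_act (mob u k))" if "norm u = 1" "k \<in> K" for u k
    unfolding cc_test_def by (intro conjI exI[of _ L]) (use c[OF that] z[OF that] L in auto)
  obtain ch where ch: "cc_test ch" "\<And>p. p \<in> G \<Longrightarrow> indicator L p \<le> ch p"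
    by (erule chi_exists[OF L])
  have mL: "measure \<gamma> L \<le> pairing \<gamma> ch" if g: "\<gamma> \<in> ?C" for \<gamma>
  proof -
    have Ls: "L \<in> sets \<gamma>" by (rule cur_compact_sets[OF g L])
    have "integral\<^sup>L \<gamma> (indicator L) \<le> integral\<^sup>L \<gamma> ch"
      by (rule integral_mono[OF integrable_real_indicator[OF Ls cur_compact_fin[OF g L]] cc_integrable[OF g ch(1)]])
         (use ch(2) cur_space[OF g] in auto)
    moreover have "integral\<^sup>L \<gamma> (indicator L) = measure \<gamma> L"
      using Ls by (simp add: Int_absorb2 sets.sets_into_space)
    ultimately show ?thesis by (simp add: pairing_def)
  qed
  define M1 where "M1 = pairing \<beta>0 ch + 1"
  have M1: "M1 \<ge> 1" "measure \<beta>0 L \<le> M1"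
  proof -
    have "0 \<le> measure \<beta>0 L" by (rule measure_nonneg)
    then show "M1 \<ge> 1" "measure \<beta>0 L \<le> M1" using mL[OF b0] unfolding M1_def by linarith+
  qed
  define \<epsilon> where "\<epsilon> = \<delta> / (4 * M1)"
  have epos: "\<epsilon> > 0" using dpos M1 by (simp add: \<epsilon>_def)
  have eM: "\<epsilon> * M1 = \<delta> / 4" using M1 by (simp add: \<epsilon>_def)
  have "uniformly_continuous_on (sphere 0 1 \<times> (K \<times> L)) (\<lambda>x. \<xi> (jm x))"
    by (rule compact_uniformly_continuous[OF jc]) (intro compact_Times compact_sphere K(1) L(1))
  then obtain \<eta> where eta: "\<eta> > 0"
    and uc: "\<And>x x'. x \<in> sphere 0 1 \<times> (K \<times> L) \<Longrightarrow> x' \<in> sphere 0 1 \<times> (K \<times> L) \<Longrightarrow> dist x' x < \<eta> \<Longrightarrow>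
               dist (\<xi> (jm x')) (\<xi> (jm x)) < \<epsilon>"
    unfolding uniformly_continuous_on_def using epos by metis
  have cov: "sphere (0::complex) 1 \<times> K \<subseteq> (\<Union>n\<in>sphere 0 1 \<times> K. ball n \<eta>)" using eta by force
  obtain N where N: "N \<subseteq> sphere (0::complex) 1 \<times> K" "finite N" "sphere 0 1 \<times> K \<subseteq> (\<Union>n\<in>N. ball n \<eta>)"
    by (rule compactE_image[OF compact_Times[OF compact_sphere K(1)] _ cov]) (simp, blast)
  define H where "H n = \<xi> \<circ> geod_act (mob (fst n) (snd n))" for n :: "complex \<times> complex"
  have HN: "cc_test (H n)" if "n \<in> N" for n
    using N(1) that Hcc[of "fst n" "snd n"] by (auto simp: H_def mem_Times_iff)
  define W where "W \<gamma> \<zeta> \<epsilon>' = {\<beta> \<in> ?C. \<bar>pairing \<beta> \<zeta> - pairing \<gamma> \<zeta>\<bar> < \<epsilon>'}" for \<gamma> \<zeta> \<epsilon>'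
  have Wopen: "generate_topology_on {{\<beta> \<in> ?C. \<bar>pairing \<beta> \<zeta> - pairing \<alpha> \<zeta>\<bar> < e} | \<alpha> \<zeta> e. \<alpha> \<in> ?C \<and> cc_test \<zeta> \<and> e > 0} (W \<gamma> \<zeta> \<epsilon>')"
    if "\<gamma> \<in> ?C" "cc_test \<zeta>" "\<epsilon>' > 0" for \<gamma> \<zeta> \<epsilon>'
    by (rule generate_topology_on.Basis) (use that in \<open>auto simp: W_def\<close>)
  define F where "F = insert (W \<beta>0 ch 1) ((\<lambda>n. W \<beta>0 (H n) (\<delta>/4)) ` N)"
  define V where "V = \<Inter>F"
  have "openin ?T V"
    unfolding weak_star_topology_def openin_topology_generated_by_iff V_def
  proof (rule generate_topology_on_Inter)
    show "finite F" using N(2) by (simp add: F_def)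
    show "F \<noteq> {}" by (simp add: F_def)
    fix X assume "X \<in> F"
    then show "generate_topology_on {{\<beta> \<in> ?C. \<bar>pairing \<beta> \<zeta> - pairing \<alpha> \<zeta>\<bar> < e} | \<alpha> \<zeta> e. \<alpha> \<in> ?C \<and> cc_test \<zeta> \<and> e > 0} X"
      unfolding F_def using Wopen[OF b0 ch(1)] Wopen[OF b0 HN] dpos by auto
  qed
  moreover have "\<beta>0 \<in> V" using b0 dpos by (auto simp: V_def F_def W_def)
  moreover have "V \<subseteq> ?U"
  proof
    fix \<beta> assume bV: "\<beta> \<in> V"
    have bC: "\<beta> \<in> ?C" using bV by (auto simp: V_def F_def W_def)
    have bch: "\<bar>pairing \<beta> ch - pairing \<beta>0 ch\<bar> < 1" using bV by (auto simp: V_def F_def W_def)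
    have bH: "\<bar>pairing \<beta> (H n) - pairing \<beta>0 (H n)\<bar> < \<delta>/4" if "n \<in> N" for n
      using bV that by (auto simp: V_def F_def W_def)
    have mb: "measure \<beta> L \<le> M1" using mL[OF bC] bch by (simp add: M1_def)
    have each: "\<bar>pairing \<beta> (\<xi> \<circ> geod_act \<phi>) - pairing \<alpha> (\<xi> \<circ> geod_act \<phi>)\<bar> \<le> d + 3 * \<delta> / 4"
      if phi: "\<phi> \<in> disc_auts" for \<phi>
    proof -
      obtain u k where uk: "norm u = 1" "k \<in> K"
        and red: "\<And>\<gamma>. \<gamma> \<in> ?C \<Longrightarrow> pairing \<gamma> (\<xi> \<circ> geod_act \<phi>) = pairing \<gamma> (\<xi> \<circ> geod_act (mob u k))"
        by (erule pair_reduce[OF Gm K(2,3) phi cxi])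
      have "(u, k) \<in> sphere 0 1 \<times> K" using uk by simp
      then have "(u, k) \<in> (\<Union>n\<in>N. ball n \<eta>)" using N(3) by blast
      then obtain n where n: "n \<in> N" "dist n (u, k) < \<eta>" by (auto simp del: prod.collapse)
      have nSK: "norm (fst n) = 1" "snd n \<in> K" using n(1) N(1) by (auto simp: mem_Times_iff)
      let ?F = "\<xi> \<circ> geod_act (mob u k)"
      have close: "\<bar>pairing \<gamma> ?F - pairing \<gamma> (H n)\<bar> \<le> \<epsilon> * measure \<gamma> L" if g: "\<gamma> \<in> ?C" for \<gamma>
      proof -
        have "pairing \<gamma> ?F - pairing \<gamma> (H n) = pairing \<gamma> (\<lambda>p. ?F p - H n p)"
          by (rule pairing_diff[OF g Hcc[OF uk] HN[OF n(1)]])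
        also have "\<bar>\<dots>\<bar> \<le> \<epsilon> * measure \<gamma> L"
          unfolding pairing_def
        proof (rule cur_int_bound(2)[OF g L])
          show "continuous_on G (\<lambda>p. ?F p - H n p)"
            using c[OF uk] c[OF nSK] by (simp add: H_def continuous_on_diff)
          show "?F p - H n p = 0" if "p \<in> G - L" for p
            using z[OF uk that] z[OF nSK that] by (simp add: H_def)
          show "\<bar>?F p - H n p\<bar> \<le> \<epsilon>" if p: "p \<in> G" for p
          proof (cases "p \<in> L")
            case True
            have "dist (\<xi> (jm (u, k, p))) (\<xi> (jm (fst n, snd n, p))) < \<epsilon>"
              by (rule uc) (use True uk nSK n(2) dist_triple[of u k p n] in \<open>auto simp: dist_commute\<close>)
            then show ?thesis by (simp add: jm_def H_def dist_real_def)
          next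
            case False
            then show ?thesis using z[OF uk] z[OF nSK] p epos by (simp add: H_def)
          qed
        qed
        finally show ?thesis .
      qed
      have t1: "\<bar>pairing \<beta> ?F - pairing \<beta> (H n)\<bar> \<le> \<delta>/4"
        using close[OF bC] mb epos eM mult_left_mono[OF mb, of \<epsilon>] by linarith
      have t3: "\<bar>pairing \<beta>0 ?F - pairing \<beta>0 (H n)\<bar> \<le> \<delta>/4"
        using close[OF b0] M1 epos eM mult_left_mono[OF M1(2), of \<epsilon>] by linarith
      have t2: "\<bar>pairing \<beta> (H n) - pairing \<beta>0 (H n)\<bar> < \<delta>/4" by (rule bH[OF n(1)])
      have t4: "\<bar>pairing \<beta>0 ?F - pairing \<alpha> ?F\<bar> \<le> d" using dle[OF phi] red[OF b0] red[OF aC] by simp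
      have "\<bar>pairing \<beta> ?F - pairing \<alpha> ?F\<bar> \<le> d + 3 * \<delta> / 4" using t1 t2 t3 t4 by linarith
      then show ?thesis using red[OF bC] red[OF aC] by simp
    qed
    have "(SUP \<phi>\<in>disc_auts. \<bar>pairing \<beta> (\<xi> \<circ> geod_act \<phi>) - pairing \<alpha> (\<xi> \<circ> geod_act \<phi>)\<bar>) \<le> d + 3 * \<delta> / 4"
      by (rule cSUP_least[OF disc_auts_ne each])
    also have "\<dots> < e" using dpos by (simp add: \<delta>_def field_simps)
    finally show "\<beta> \<in> ?U" using bC by simp
  qed
  ultimately show "\<exists>T. openin ?T T \<and> \<beta>0 \<in> T \<and> T \<subseteq> ?U" by blast
qed

theorem proposition2p2:
  fixes \<Gamma> :: "(complex \<Rightarrow> complex) set"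
  assumes "cocompact_deck_group \<Gamma>"
  shows "bounded_currents \<Gamma> = geodesic_currents \<Gamma> \<and>
         uniform_weak_star_topology (bounded_currents \<Gamma>) = weak_star_topology (geodesic_currents \<Gamma>)"
proof
  show p1: "bounded_currents \<Gamma> = geodesic_currents \<Gamma>" by (rule part1[OF assms])
  let ?C = "geodesic_currents \<Gamma>"
  have "openin (weak_star_topology ?C) S" if "openin (uniform_weak_star_topology ?C) S" for S
  proof -
    from that have "generate_topology_on {{\<beta> \<in> ?C. (SUP \<phi>\<in>disc_auts. \<bar>pairing \<beta> (\<xi> \<circ> geod_act \<phi>) - pairing \<alpha> (\<xi> \<circ> geod_act \<phi>)\<bar>) < e}
       | \<alpha> \<xi> e. \<alpha> \<in> ?C \<and> cc_test \<xi> \<and> e > 0} S"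
      unfolding uniform_weak_star_topology_def by (simp add: openin_topology_generated_by_iff)
    then show ?thesis
    proof (rule generate_topology_on_coarsest[rotated 2])
      show "istopology (openin (weak_star_topology ?C))" by (rule istopology_openin)
      fix X assume "X \<in> {{\<beta> \<in> ?C. (SUP \<phi>\<in>disc_auts. \<bar>pairing \<beta> (\<xi> \<circ> geod_act \<phi>) - pairing \<alpha> (\<xi> \<circ> geod_act \<phi>)\<bar>) < e}
       | \<alpha> \<xi> e. \<alpha> \<in> ?C \<and> cc_test \<xi> \<and> e > 0}"
      then obtain \<alpha> \<xi> e where X: "X = {\<beta> \<in> ?C. (SUP \<phi>\<in>disc_auts. \<bar>pairing \<beta> (\<xi> \<circ> geod_act \<phi>) - pairing \<alpha> (\<xi> \<circ> geod_act \<phi>)\<bar>) < e}"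
        and c: "\<alpha> \<in> ?C" "cc_test \<xi>" "e > 0" by blast
      show "openin (weak_star_topology ?C) X" unfolding X by (rule U_open[OF assms c])
    qed
  qed
  moreover have "openin (uniform_weak_star_topology ?C) S" if "openin (weak_star_topology ?C) S" for S
  proof -
    from that have "generate_topology_on {{\<beta> \<in> ?C. \<bar>pairing \<beta> \<xi> - pairing \<alpha> \<xi>\<bar> < e} | \<alpha> \<xi> e. \<alpha> \<in> ?C \<and> cc_test \<xi> \<and> e > 0} S"
      unfolding weak_star_topology_def by (simp add: openin_topology_generated_by_iff)
    then show ?thesis
    proof (rule generate_topology_on_coarsest[rotated 2])
      show "istopology (openin (uniform_weak_star_topology ?C))" by (rule istopology_openin)
      fix X assume "X \<in> {{\<beta> \<in> ?C. \<bar>pairing \<beta> \<xi> - pairing \<alpha> \<xi>\<bar> < e} | \<alpha> \<xi> e. \<alpha> \<in> ?C \<and> cc_test \<xi> \<and> e > 0}"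
      then obtain \<alpha> \<xi> e where X: "X = {\<beta> \<in> ?C. \<bar>pairing \<beta> \<xi> - pairing \<alpha> \<xi>\<bar> < e}"
        and c: "\<alpha> \<in> ?C" "cc_test \<xi>" "e > 0" by blast
      show "openin (uniform_weak_star_topology ?C) X" unfolding X by (rule W_open[OF assms c])
    qed
  qed
  ultimately show "uniform_weak_star_topology (bounded_currents \<Gamma>) = weak_star_topology ?C"
    unfolding p1 topology_eq by blast
qed

end
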